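(* Let $A$ be a finite alphabet, $f$ a bLSP morphism on $A$ and $a,b,c$ pairwise distinct letters of $A$. Then $f$ is LSP $(a,b,c)$-breaking if and only if the longest common prefix of $f(b)$ and $f(c)$ is strictly longer than the longest common prefix of $f(a)$ and $f(b)$.
   Context: A finite word $u$ is a left special factor of a word $w$ if there are distinct letters $x\neq y$ with $xu$ and $yu$ factors of $w$. A word is LSP if every left special factor of it is a prefix of it. A bLSP morphism on $A$ is an endomorphism $f$ of $A^*$ such that there is a letter $\alpha$ with $f(\alpha)=\alpha$ and, for every letter $\beta\neq\alpha$, there is a letter $\gamma$ with $f(\beta)=f(\gamma)\beta$. For pairwise distinct letters $a,b,c$, an infinite word $\mathbf{w}$ is $(a,b,c)$-fragile if there exist a finite word $u$ and distinct letters $\beta\neq\gamma$ such that $ua$ is a prefix of $\mathbf{w}$ and $\beta ub$, $\gamma uc$ are factors of $\mathbf{w}$. A morphism $f$ is LSP $(a,b,c)$-breaking if for every $(a,b,c)$-fragile infinite LSP word $\mathbf{w}$, $f(\mathbf{w})$ is not LSP. *)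

theory Defs
  imports Main
begin

definition pref :: "(nat \<Rightarrow> 'a) \<Rightarrow> nat \<Rightarrow> 'a list" where
  "pref w n = map w [0..<n]"

definition is_factor_inf :: "'a list \<Rightarrow> (nat \<Rightarrow> 'a) \<Rightarrow> bool" where
  "is_factor_inf u w \<longleftrightarrow> (\<exists>i. u = map w [i..<i + length u])"

definition is_prefix_inf :: "'a list \<Rightarrow> (nat \<Rightarrow> 'a) \<Rightarrow> bool" where
  "is_prefix_inf u w \<longleftrightarrow> u = pref w (length u)"

definition left_special_inf :: "'a list \<Rightarrow> (nat \<Rightarrow> 'a) \<Rightarrow> bool" where
  "left_special_inf u w \<longleftrightarrow>
     (\<exists>x y. x \<noteq> y \<and> is_factor_inf (x # u) w \<and> is_factor_inf (y # u) w)"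

definition LSP_inf :: "(nat \<Rightarrow> 'a) \<Rightarrow> bool" where
  "LSP_inf w \<longleftrightarrow> (\<forall>u. left_special_inf u w \<longrightarrow> is_prefix_inf u w)"

definition morph :: "('a \<Rightarrow> 'a list) \<Rightarrow> 'a list \<Rightarrow> 'a list" where
  "morph f u = concat (map f u)"

text \<open>Image of an infinite word under a morphism (meaningful for non-erasing f,
  in particular for bLSP morphisms): the n-th letter of f(w) is the n-th letter
  of f(w_0 ... w_n).\<close>
definition morph_inf :: "('a \<Rightarrow> 'a list) \<Rightarrow> (nat \<Rightarrow> 'a) \<Rightarrow> (nat \<Rightarrow> 'a)" where
  "morph_inf f w = (\<lambda>n. morph f (pref w (Suc n)) ! n)"

definition bLSP :: "'a set \<Rightarrow> ('a \<Rightarrow> 'a list) \<Rightarrow> bool" where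
  "bLSP A f \<longleftrightarrow> (\<forall>x\<in>A. set (f x) \<subseteq> A) \<and>
     (\<exists>\<alpha>\<in>A. f \<alpha> = [\<alpha>] \<and> (\<forall>\<beta>\<in>A. \<beta> \<noteq> \<alpha> \<longrightarrow> (\<exists>\<gamma>\<in>A. f \<beta> = f \<gamma> @ [\<beta>])))"

definition fragile :: "'a \<Rightarrow> 'a \<Rightarrow> 'a \<Rightarrow> (nat \<Rightarrow> 'a) \<Rightarrow> bool" where
  "fragile a b c w \<longleftrightarrow> (\<exists>u \<beta> \<gamma>. \<beta> \<noteq> \<gamma> \<and> is_prefix_inf (u @ [a]) w \<and>
      is_factor_inf (\<beta> # u @ [b]) w \<and> is_factor_inf (\<gamma> # u @ [c]) w)"

definition LSP_breaking :: "'a set \<Rightarrow> ('a \<Rightarrow> 'a list) \<Rightarrow> 'a \<Rightarrow> 'a \<Rightarrow> 'a \<Rightarrow> bool" where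
  "LSP_breaking A f a b c \<longleftrightarrow>
     (\<forall>w. (\<forall>n. w n \<in> A) \<longrightarrow> fragile a b c w \<longrightarrow> LSP_inf w \<longrightarrow> \<not> LSP_inf (morph_inf f w))"

fun lcp :: "'a list \<Rightarrow> 'a list \<Rightarrow> 'a list" where
  "lcp (x # xs) (y # ys) = (if x = y then x # lcp xs ys else [])"
| "lcp _ _ = []"

end

theory Submission
  imports Defs
begin

lemma pref_Suc: "pref w (Suc k) = pref w k @ [w k]" by (simp add: pref_def)
lemma length_pref[simp]: "length (pref w k) = k" by (simp add: pref_def)
lemma pref_nth[simp]: "i < k \<Longrightarrow> pref w k ! i = w i" by (simp add: pref_def)
lemma pref_0[simp]: "pref w 0 = []" by (simp add: pref_def)
lemma pref_add: "pref w (k+m) = pref w k @ map w [k..<k+m]"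
  unfolding pref_def using upt_add_eq_append[of 0 k m] by simp
lemma morph_Nil[simp]: "morph f [] = []" by (simp add: morph_def)
lemma morph_Cons[simp]: "morph f (x#v) = f x @ morph f v" by (simp add: morph_def)
lemma morph_append[simp]: "morph f (u@v) = morph f u @ morph f v" by (simp add: morph_def)

lemma map_shift: "map w [k..<k+m] = pref (\<lambda>j. w (k+j)) m"
  by (rule nth_equalityI) (auto simp: pref_def)

lemma pref_take: "n \<le> m \<Longrightarrow> pref F n = take n (pref F m)"
  by (simp add: pref_def take_map)

lemma map_upt_eqI:
  assumes "\<And>t. t < length xs \<Longrightarrow> g (a + t) = xs ! t"
  shows "map g [a..<a + length xs] = xs"
  by (rule nth_equalityI) (simp_all add: assms)

lemma fac_iff: "is_factor_inf u F \<longleftrightarrow> (\<exists>i. \<forall>t<length u. F (i+t) = u ! t)"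
proof
  assume "is_factor_inf u F"
  then obtain i where "u = map F [i..<i + length u]" unfolding is_factor_inf_def by blast
  then have "\<forall>t<length u. F (i+t) = u ! t" by (metis add_diff_cancel_left' nth_map_upt)
  then show "\<exists>i. \<forall>t<length u. F (i+t) = u ! t" by blast
next
  assume "\<exists>i. \<forall>t<length u. F (i+t) = u ! t"
  then obtain i where "\<forall>t<length u. F (i+t) = u ! t" by blast
  then have "map F [i..<i + length u] = u" by (intro map_upt_eqI) auto
  then show "is_factor_inf u F" unfolding is_factor_inf_def by metis
qed

lemma factor_sub:
  assumes "is_factor_inf (x@v@y) F" shows "is_factor_inf v F"
proof -
  from assms obtain i where i: "\<forall>t<length (x@v@y). F (i+t) = (x@v@y) ! t"
    unfolding fac_iff by blast
  have "\<forall>t<length v. F ((i + length x)+t) = v ! t"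
  proof (intro allI impI)
    fix t assume "t < length v"
    then have "F (i + (length x + t)) = (x@v@y) ! (length x + t)" using i by simp
    then show "F ((i + length x)+t) = v ! t" using \<open>t < length v\<close>
      by (simp add: nth_append add.assoc)
  qed
  then show ?thesis unfolding fac_iff by blast
qed

lemma lcp_take: "lcp x y = take (length (lcp x y)) x \<and> lcp x y = take (length (lcp x y)) y"
  by (induction x y rule: lcp.induct) auto
lemma lcp_len: "length (lcp x y) \<le> length x \<and> length (lcp x y) \<le> length y"
  by (induction x y rule: lcp.induct) auto
lemma take_lcp: "n \<le> length (lcp x y) \<Longrightarrow> take n x = take n y"
  by (metis lcp_take min.absorb1 take_take)
lemma lcp_ge: "n \<le> length x \<Longrightarrow> n \<le> length y \<Longrightarrow> take n x = take n y \<Longrightarrow> n \<le> length (lcp x y)"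
proof (induction x y arbitrary: n rule: lcp.induct)
  case (1 x xs y ys)
  then show ?case by (cases n) auto
qed auto
lemma lcp_neq: "length (lcp x y) < length x \<Longrightarrow> length (lcp x y) < length y \<Longrightarrow>
   x ! length (lcp x y) \<noteq> y ! length (lcp x y)"
  by (induction x y rule: lcp.induct) auto
lemma lcp_sym: "length (lcp x y) = length (lcp y x)"
  by (induction x y rule: lcp.induct) auto


lemma fac_mem: "is_factor_inf v w \<Longrightarrow> \<forall>n. w n \<in> A \<Longrightarrow> set v \<subseteq> A"
  unfolding is_factor_inf_def by (metis (no_types, lifting) ex_map_conv subsetI)

lemma split3: "x = x1 @ [b] \<Longrightarrow> y = p @ y2 \<Longrightarrow> x @ m @ y = x1 @ (b # m @ p) @ y2" by simp

lemma set_pref: "\<forall>n. w n \<in> A \<Longrightarrow> set (pref w k) \<subseteq> A" by (auto simp: pref_def)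

lemma len_morph_ge:
  assumes "\<forall>x\<in>A. f x \<noteq> []" "set v \<subseteq> A"
  shows "length v \<le> length (morph f v)"
  using assms(2)
proof (induction v)
  case Nil then show ?case by simp
next
  case (Cons x v)
  then have "f x \<noteq> []" using assms(1) by auto
  then show ?case using Cons by (cases "f x") auto
qed

lemma morph_inf_nth:
  assumes ne: "\<forall>x\<in>A. f x \<noteq> []" and wA: "\<forall>n. w n \<in> A"
    and n: "n < length (morph f (pref w m))"
  shows "morph_inf f w n = morph f (pref w m) ! n"
proof (cases "m \<le> Suc n")
  case True
  then obtain d where d: "Suc n = m + d" using le_Suc_ex by blast
  have "morph_inf f w n = morph f (pref w (m+d)) ! n" by (simp add: morph_inf_def d)
  also have "\<dots> = morph f (pref w m) ! n" using n by (simp add: pref_add nth_append)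
  finally show ?thesis .
next
  case False
  then obtain d where d: "m = Suc n + d" using le_Suc_ex[of "Suc n" m] by auto
  have "Suc n \<le> length (morph f (pref w (Suc n)))"
    using len_morph_ge[OF ne set_pref[OF wA]] by (metis length_pref)
  then have "morph f (pref w m) ! n = morph f (pref w (Suc n)) ! n"
    unfolding d pref_add[of w "Suc n" d] by (simp add: nth_append)
  then show ?thesis by (simp add: morph_inf_def)
qed

lemma morph_factor:
  assumes ne: "\<forall>x\<in>A. f x \<noteq> []" and wA: "\<forall>n. w n \<in> A"
    and fv: "is_factor_inf v w"
  shows "is_factor_inf (morph f v) (morph_inf f w)"
proof -
  from fv obtain i where i: "v = map w [i..<i + length v]" unfolding is_factor_inf_def by blast
  have pw: "pref w (i + length v) = pref w i @ v" using i by (simp add: pref_add)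
  have "\<forall>t<length (morph f v). morph_inf f w (length (morph f (pref w i)) + t) = morph f v ! t"
  proof (intro allI impI)
    fix t assume t: "t < length (morph f v)"
    have "morph_inf f w (length (morph f (pref w i)) + t) = morph f (pref w (i + length v)) ! (length (morph f (pref w i)) + t)"
      using t by (intro morph_inf_nth[OF ne wA]) (simp add: pw)
    then show "morph_inf f w (length (morph f (pref w i)) + t) = morph f v ! t"
      by (simp add: pw nth_append)
  qed
  then show ?thesis unfolding fac_iff by blast
qed

lemma morph_pref:
  assumes ne: "\<forall>x\<in>A. f x \<noteq> []" and wA: "\<forall>n. w n \<in> A"
  shows "pref (morph_inf f w) (length (morph f (pref w k))) = morph f (pref w k)"
  by (rule nth_equalityI) (simp_all add: morph_inf_nth[OF ne wA])

lemma morph_shift: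
  assumes ne: "\<forall>x\<in>A. f x \<noteq> []" and wA: "\<forall>n. w n \<in> A"
  shows "morph_inf f w (length (morph f (pref w k)) + n) = morph_inf f (\<lambda>j. w (k+j)) n"
proof -
  let ?w = "\<lambda>j. w (k+j)"
  have pw: "pref w (k + Suc n) = pref w k @ pref ?w (Suc n)"
    using pref_add[of w k "Suc n"] map_shift[of w k "Suc n"] by simp
  have wA': "\<forall>n. ?w n \<in> A" using wA by simp
  have "Suc n \<le> length (morph f (pref ?w (Suc n)))"
    using len_morph_ge[OF ne set_pref[OF wA']] by (metis length_pref)
  then have "morph_inf f w (length (morph f (pref w k)) + n) = morph f (pref w (k + Suc n)) ! (length (morph f (pref w k)) + n)"
    by (intro morph_inf_nth[OF ne wA]) (unfold pw, simp)
  also have "\<dots> = morph f (pref ?w (Suc n)) ! n" unfolding pw by (simp add: nth_append)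
  also have "\<dots> = morph_inf f ?w n" by (simp add: morph_inf_def)
  finally show ?thesis .
qed

lemma first_block:
  assumes ne: "\<forall>x\<in>A. f x \<noteq> []" and wA: "\<forall>n. w n \<in> A"
    and n: "n < length (f (w 0))"
  shows "morph_inf f w n = f (w 0) ! n"
proof -
  have p1: "pref w (Suc 0) = [w 0]" by (simp add: pref_def)
  show ?thesis using morph_inf_nth[OF ne wA, of n 1] n by (simp add: p1)
qed

lemma morph_pref_Suc: "length (morph f (pref w (Suc k))) = length (morph f (pref w k)) + length (f (w k))"
  by (simp add: pref_Suc)

lemma block_decomp:
  assumes ne: "\<forall>x\<in>A. f x \<noteq> []" and wA: "\<forall>n. w n \<in> A"
  shows "\<exists>k i. n = length (morph f (pref w k)) + i \<and> i < length (f (w k))"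
proof (induction n)
  case 0
  have "f (w 0) \<noteq> []" using ne wA by auto
  then show ?case by (intro exI[of _ 0]) auto
next
  case (Suc n)
  then obtain k i where ki: "n = length (morph f (pref w k)) + i" "i < length (f (w k))" by blast
  show ?case
  proof (cases "Suc i < length (f (w k))")
    case True then show ?thesis using ki by (intro exI[of _ k] exI[of _ "Suc i"]) auto
  next
    case False
    then have "Suc n = length (morph f (pref w (Suc k))) + 0" using ki by (simp add: morph_pref_Suc)
    moreover have "f (w (Suc k)) \<noteq> []" using ne wA by auto
    ultimately show ?thesis by blast
  qed
qed


locale bl =
  fixes A :: "'a set" and f :: "'a \<Rightarrow> 'a list" and \<alpha> :: 'a
  assumes cl: "\<And>x. x \<in> A \<Longrightarrow> set (f x) \<subseteq> A"
    and aA: "\<alpha> \<in> A" and fal: "f \<alpha> = [\<alpha>]"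
    and stp: "\<And>\<beta>. \<beta> \<in> A \<Longrightarrow> \<beta> \<noteq> \<alpha> \<Longrightarrow> \<exists>\<gamma>\<in>A. f \<beta> = f \<gamma> @ [\<beta>]"
begin

lemma struct: "z \<in> A \<Longrightarrow> f z \<noteq> [] \<and> f z ! 0 = \<alpha> \<and> last (f z) = z \<and>
   (\<forall>i<length (f z). f (f z ! i) = take (Suc i) (f z))"
proof (induction "length (f z)" arbitrary: z rule: less_induct)
  case less
  show ?case
  proof (cases "z = \<alpha>")
    case True then show ?thesis using fal by auto
  next
    case False
    then obtain \<gamma> where g: "\<gamma> \<in> A" "f z = f \<gamma> @ [z]" using stp less.prems by blast
    have IH: "f \<gamma> \<noteq> [] \<and> f \<gamma> ! 0 = \<alpha> \<and> last (f \<gamma>) = \<gamma> \<and> (\<forall>i<length (f \<gamma>). f (f \<gamma> ! i) = take (Suc i) (f \<gamma>))"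
      using less.hyps[of \<gamma>] g by simp
    show ?thesis
    proof (intro conjI allI impI)
      show "f z \<noteq> []" using g by simp
      show "f z ! 0 = \<alpha>" using g IH by (simp add: nth_append)
      show "last (f z) = z" using g by simp
      fix i assume i: "i < length (f z)"
      show "f (f z ! i) = take (Suc i) (f z)"
      proof (cases "i < length (f \<gamma>)")
        case True then show ?thesis using IH g by (simp add: nth_append)
      next
        case False then have "i = length (f \<gamma>)" using i g by simp
        then show ?thesis using g by simp
      qed
    qed
  qed
qed

lemma ne: "\<forall>x\<in>A. f x \<noteq> []" using struct by blast
lemma hd0: "z \<in> A \<Longrightarrow> f z ! 0 = \<alpha>" using struct by blast
lemma lastz: "z \<in> A \<Longrightarrow> last (f z) = z" using struct by blast
lemma take_eq: "z \<in> A \<Longrightarrow> i < length (f z) \<Longrightarrow> f (f z ! i) = take (Suc i) (f z)"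
  using struct by blast

lemma alpha_only0:
  assumes "z \<in> A" "i < length (f z)" "f z ! i = \<alpha>" shows "i = 0"
proof -
  have "take (Suc i) (f z) = [\<alpha>]" using take_eq[OF assms(1,2)] assms(3) fal by simp
  then have "length (take (Suc i) (f z)) = 1" by simp
  then show ?thesis using assms(2) by simp
qed

lemma same_letter:
  assumes "z \<in> A" "z' \<in> A" "i < length (f z)" "i' < length (f z')" "f z ! i = f z' ! i'"
  shows "i = i' \<and> take (Suc i) (f z) = take (Suc i) (f z')"
proof -
  have e: "take (Suc i) (f z) = take (Suc i') (f z')"
    using take_eq[OF assms(1,3)] take_eq[OF assms(2,4)] assms(5) by simp
  then have "length (take (Suc i) (f z)) = length (take (Suc i') (f z'))" by simp
  then have "i = i'" using assms(3,4) by simp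
  then show ?thesis using e by simp
qed

lemma last_nth: "z \<in> A \<Longrightarrow> f z ! (length (f z) - 1) = z"
  using struct by (metis last_conv_nth)

lemma breaking:
  assumes cond: "length (lcp (f a) (f b)) < length (lcp (f b) (f c))"
    and wA: "\<forall>n. w n \<in> A" and frag: "fragile a b c w"
    and aA': "a \<in> A"
  shows "\<not> LSP_inf (morph_inf f w)"
proof
  assume L: "LSP_inf (morph_inf f w)"
  obtain u \<beta> \<gamma> where bg: "\<beta> \<noteq> \<gamma>" and pu: "is_prefix_inf (u @ [a]) w"
    and fb: "is_factor_inf (\<beta> # u @ [b]) w" and fc: "is_factor_inf (\<gamma> # u @ [c]) w"
    using frag unfolding fragile_def by blast
  define l where "l = length (lcp (f a) (f b))"
  define p where "p = take (Suc l) (f b)"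
  have lb: "Suc l \<le> length (f b)" "Suc l \<le> length (f c)"
    using cond lcp_len[of "f b" "f c"] unfolding l_def by auto
  have pc: "p = take (Suc l) (f c)" unfolding p_def
    using take_lcp[of "Suc l" "f b" "f c"] cond unfolding l_def by simp
  have bA: "\<beta> \<in> A" "\<gamma> \<in> A" using fac_mem[OF fb wA] fac_mem[OF fc wA] by auto
  have ex: "\<And>x. x \<in> A \<Longrightarrow> f x = butlast (f x) @ [x]"
    using ne lastz by (metis append_butlast_last_id)
  have "is_factor_inf (morph f (\<beta> # u @ [b])) (morph_inf f w)"
    using morph_factor[OF ne wA fb] .
  moreover have "morph f (\<beta> # u @ [b]) = butlast (f \<beta>) @ (\<beta> # morph f u @ p) @ drop (Suc l) (f b)"
    using split3[OF ex[OF bA(1)], of "f b" p "drop (Suc l) (f b)"] unfolding p_def by simp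
  ultimately have f1: "is_factor_inf (\<beta> # morph f u @ p) (morph_inf f w)"
    using factor_sub by metis
  have "is_factor_inf (morph f (\<gamma> # u @ [c])) (morph_inf f w)"
    using morph_factor[OF ne wA fc] .
  moreover have "morph f (\<gamma> # u @ [c]) = butlast (f \<gamma>) @ (\<gamma> # morph f u @ p) @ drop (Suc l) (f c)"
    using split3[OF ex[OF bA(2)], of "f c" p "drop (Suc l) (f c)"] unfolding pc by simp
  ultimately have f2: "is_factor_inf (\<gamma> # morph f u @ p) (morph_inf f w)"
    using factor_sub by metis
  have "left_special_inf (morph f u @ p) (morph_inf f w)"
    unfolding left_special_inf_def using bg f1 f2 by blast
  then have pp: "is_prefix_inf (morph f u @ p) (morph_inf f w)" using L unfolding LSP_inf_def by blast
  define nx where "nx = w (Suc (length u))"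
  have nxA: "nx \<in> A" using wA nx_def by simp
  have pw: "pref w (Suc (Suc (length u))) = u @ [a] @ [nx]"
    using pu unfolding is_prefix_inf_def nx_def by (simp add: pref_Suc)
  define Q where "Q = morph f u @ f a @ f nx"
  have PQ: "pref (morph_inf f w) (length Q) = Q"
    using morph_pref[OF ne wA, of "Suc (Suc (length u))"] unfolding pw Q_def by simp
  have lfa: "l \<le> length (f a)" using lcp_len unfolding l_def by blast
  have fnx: "f nx \<noteq> []" using ne nxA by auto
  have lenp: "length p = Suc l" using lb unfolding p_def by simp
  have le: "length (morph f u @ p) \<le> length Q" using lfa fnx lenp unfolding Q_def
    by (cases "f nx") auto
  have "pref (morph_inf f w) (length (morph f u @ p)) = take (length (morph f u @ p)) Q"
    using pref_take[OF le, of "morph_inf f w"] PQ by simp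
  then have "morph f u @ p = take (length (morph f u @ p)) Q"
    using pp unfolding is_prefix_inf_def by metis
  then have pQ: "p = take (Suc l) (f a @ f nx)" unfolding Q_def using lenp by simp
  show False
  proof (cases "Suc l \<le> length (f a)")
    case True
    then have "take (Suc l) (f a) = take (Suc l) (f b)" using pQ unfolding p_def by simp
    then have "Suc l \<le> l" using lcp_ge[OF True lb(1)] unfolding l_def by simp
    then show False by simp
  next
    case False
    then have l: "l = length (f a)" using lfa by simp
    have "p ! l = (f a @ f nx) ! l" using pQ lenp by (metis lessI nth_take)
    also have "\<dots> = \<alpha>" using l hd0[OF nxA] by (simp add: nth_append)
    finally have "f b ! l = \<alpha>" unfolding p_def by simp
    moreover have "b \<in> A" using fac_mem[OF fb wA] by auto
    ultimately have "l = 0" using alpha_only0 lb(1) by simp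
    moreover have "f a \<noteq> []" using ne aA' by auto
    ultimately show False using l by simp
  qed
qed


lemma in_block:
  assumes wA: "\<forall>n. w n \<in> A" and q: "q < length (f (w k))"
  shows "morph_inf f w (length (morph f (pref w k)) + q) = f (w k) ! q"
proof -
  have wA': "\<forall>n. (\<lambda>j. w (k+j)) n \<in> A" using wA by simp
  have "morph_inf f w (length (morph f (pref w k)) + q) = morph_inf f (\<lambda>j. w (k+j)) q"
    using morph_shift[OF ne wA] .
  also have "\<dots> = f (w k) ! q" using first_block[OF ne wA', of q] q by simp
  finally show ?thesis .
qed

lemma at_block:
  assumes wA: "\<forall>n. w n \<in> A"
    and i: "\<forall>t<length (x#u). morph_inf f w (i+t) = (x#u)!t"
    and si: "Suc i = length (morph f (pref w (Suc m)))"
  shows "x = w m \<and> u = pref (morph_inf f (\<lambda>j. w (Suc m + j))) (length u)"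
proof
  have wm: "w m \<in> A" using wA by simp
  have l0: "length (f (w m)) > 0" using ne wm by auto
  have "i = length (morph f (pref w m)) + (length (f (w m)) - 1)"
    using si l0 morph_pref_Suc[of f w m] by linarith
  then have "morph_inf f w i = f (w m) ! (length (f (w m)) - 1)"
    using in_block[OF wA, of "length (f (w m)) - 1" m] l0 by simp
  also have "\<dots> = w m" using last_nth[OF wm] .
  finally have "morph_inf f w i = w m" .
  moreover have "morph_inf f w (i+0) = x" using i by auto
  ultimately show "x = w m" by simp
  show "u = pref (morph_inf f (\<lambda>j. w (Suc m + j))) (length u)"
  proof (rule nth_equalityI)
    show "length u = length (pref (morph_inf f (\<lambda>j. w (Suc m + j))) (length u))" by simp
    fix t assume t: "t < length u"
    have "morph_inf f w (i + Suc t) = (x#u) ! Suc t" using i[rule_format, of "Suc t"] t by simp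
    then have "u ! t = morph_inf f w (length (morph f (pref w (Suc m))) + t)" using si[symmetric] by simp
    also have "\<dots> = morph_inf f (\<lambda>j. w (Suc m + j)) t" using morph_shift[OF ne wA] .
    finally show "u ! t = pref (morph_inf f (\<lambda>j. w (Suc m + j))) (length u) ! t" using t by simp
  qed
qed

lemma ls_blocks:
  assumes wA: "\<forall>n. w n \<in> A" and ls: "left_special_inf u (morph_inf f w)" and un: "u \<noteq> []"
  shows "\<exists>m m'. w m \<noteq> w m' \<and> u = pref (morph_inf f (\<lambda>j. w (Suc m + j))) (length u)
                 \<and> u = pref (morph_inf f (\<lambda>j. w (Suc m' + j))) (length u)"
proof -
  let ?F = "morph_inf f w"
  let ?s = "\<lambda>k. length (morph f (pref w k))"
  obtain x y where xy: "x \<noteq> y" "is_factor_inf (x#u) ?F" "is_factor_inf (y#u) ?F"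
    using ls unfolding left_special_inf_def by blast
  obtain i where i: "\<forall>t<length (x#u). ?F (i+t) = (x#u)!t" using xy(2) unfolding fac_iff by blast
  obtain j where j: "\<forall>t<length (y#u). ?F (j+t) = (y#u)!t" using xy(3) unfolding fac_iff by blast
  obtain k q where ko: "Suc i = ?s k + q" "q < length (f (w k))" using block_decomp[OF ne wA] by blast
  obtain k' q' where ko': "Suc j = ?s k' + q'" "q' < length (f (w k'))" using block_decomp[OF ne wA] by blast
  have "?F (i + 1) = u ! 0" using i[rule_format, of 1] un by (cases u) auto
  moreover have "?F (j + 1) = u ! 0" using j[rule_format, of 1] un by (cases u) auto
  ultimately have "f (w k) ! q = f (w k') ! q'"
    using in_block[OF wA ko(2)] in_block[OF wA ko'(2)] ko(1) ko'(1) by simp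
  then have oo: "q = q'" "take (Suc q) (f (w k)) = take (Suc q) (f (w k'))"
    using same_letter[OF _ _ ko(2) ko'(2)] wA by blast+
  have o0: "q = 0"
  proof (rule ccontr)
    assume "q \<noteq> 0"
    then have i': "i = ?s k + (q - 1)" "j = ?s k' + (q - 1)" using ko(1) ko'(1) oo(1) by auto
    have "?F i = f (w k) ! (q - 1)" using in_block[OF wA, of "q - 1" k] ko(2) i'(1) by simp
    also have "\<dots> = take (Suc q) (f (w k)) ! (q - 1)" by simp
    also have "\<dots> = take (Suc q) (f (w k')) ! (q - 1)" using oo(2) by simp
    also have "\<dots> = f (w k') ! (q - 1)" by simp
    also have "\<dots> = ?F j" using in_block[OF wA, of "q - 1" k'] ko'(2) i'(2) oo(1) by simp
    finally have "?F i = ?F j" .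
    moreover have "?F (i+0) = x" using i by auto
    moreover have "?F (j+0) = y" using j by auto
    ultimately show False using xy(1) by simp
  qed
  have "k \<noteq> 0" using ko(1) o0 by (cases k) auto
  then obtain m where m: "k = Suc m" using not0_implies_Suc by blast
  have "k' \<noteq> 0" using ko'(1) o0 oo(1) by (cases k') auto
  then obtain m' where m': "k' = Suc m'" using not0_implies_Suc by blast
  have A1: "x = w m \<and> u = pref (morph_inf f (\<lambda>j. w (Suc m + j))) (length u)"
    using at_block[OF wA i] ko(1) o0 m by simp
  have A2: "y = w m' \<and> u = pref (morph_inf f (\<lambda>j. w (Suc m' + j))) (length u)"
    using at_block[OF wA j] ko'(1) o0 oo(1) m' by simp
  show ?thesis using A1 A2 xy(1) by blast
qed

lemma lcp_agree:
  assumes wA: "\<forall>n. v n \<in> A" and wA': "\<forall>n. v' n \<in> A"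
    and n: "n \<le> length (lcp (f (v 0)) (f (v' 0)))"
  shows "pref (morph_inf f v) n = pref (morph_inf f v') n"
proof (rule nth_equalityI)
  show "length (pref (morph_inf f v) n) = length (pref (morph_inf f v') n)" by simp
  fix t assume "t < length (pref (morph_inf f v) n)"
  then have t: "t < n" by simp
  have l: "n \<le> length (f (v 0))" "n \<le> length (f (v' 0))" using n lcp_len by (metis le_trans)+
  have tk: "take n (f (v 0)) = take n (f (v' 0))" using take_lcp[OF n] .
  have "morph_inf f v t = f (v 0) ! t" using first_block[OF ne wA] t l by simp
  also have "\<dots> = take n (f (v 0)) ! t" using t by simp
  also have "\<dots> = take n (f (v' 0)) ! t" using tk by simp
  also have "\<dots> = f (v' 0) ! t" using t by simp
  also have "\<dots> = morph_inf f v' t" using first_block[OF ne wA'] t l by simp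
  finally show "pref (morph_inf f v) n ! t = pref (morph_inf f v') n ! t" using t by simp
qed

lemma lcp_bound_aux:
  assumes wA: "\<forall>n. v n \<in> A" and wA': "\<forall>n. v' n \<in> A"
    and L: "L = length (lcp (f (v 0)) (f (v' 0)))" and LX: "L = length (f (v 0))"
    and ne': "f (v 0) \<noteq> f (v' 0)"
  shows "morph_inf f v L \<noteq> morph_inf f v' L"
proof -
  have "morph_inf f v L = f (v 1) ! 0"
    using in_block[OF wA, of 0 1] ne wA LX by (simp add: pref_def)
  then have a: "morph_inf f v L = \<alpha>" using hd0 wA by simp
  have lY: "L \<le> length (f (v' 0))" using L lcp_len by metis
  show ?thesis
  proof (cases "L < length (f (v' 0))")
    case True
    have "morph_inf f v' L = f (v' 0) ! L" using first_block[OF ne wA'] True by simp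
    moreover have "L \<noteq> 0" using LX ne wA by auto
    ultimately show ?thesis using a alpha_only0[OF _ True] wA' by auto
  next
    case False
    then have "L = length (f (v' 0))" using lY by simp
    then have "f (v 0) = f (v' 0)" using lcp_take[of "f (v 0)" "f (v' 0)"] L LX by (metis take_all_iff order_refl)
    then show ?thesis using ne' by simp
  qed
qed

lemma lcp_bound:
  assumes wA: "\<forall>n. v n \<in> A" and wA': "\<forall>n. v' n \<in> A" and d: "v 0 \<noteq> v' 0"
    and u1: "u = pref (morph_inf f v) (length u)" and u2: "u = pref (morph_inf f v') (length u)"
  shows "length u \<le> length (lcp (f (v 0)) (f (v' 0)))"
proof (rule ccontr)
  define L where "L = length (lcp (f (v 0)) (f (v' 0)))"
  assume "\<not> length u \<le> length (lcp (f (v 0)) (f (v' 0)))"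
  then have Lu: "L < length u" unfolding L_def by simp
  have eq: "morph_inf f v L = morph_inf f v' L"
    using u1 u2 Lu by (metis pref_nth)
  have ne': "f (v 0) \<noteq> f (v' 0)" using lastz wA wA' d by metis
  have lX: "L \<le> length (f (v 0))" and lY: "L \<le> length (f (v' 0))" using lcp_len L_def by metis+
  show False
  proof (cases "L = length (f (v 0))")
    case True
    then show False using lcp_bound_aux[OF wA wA' L_def True ne'] eq by simp
  next
    case F1: False
    show False
    proof (cases "L = length (f (v' 0))")
      case True
      have L': "L = length (lcp (f (v' 0)) (f (v 0)))" using L_def lcp_sym by metis
      show False using lcp_bound_aux[OF wA' wA L' True] ne' eq by metis
    next
      case False
      then have lt: "L < length (f (v 0))" "L < length (f (v' 0))" using F1 lX lY by auto
      have "morph_inf f v L = f (v 0) ! L" using first_block[OF ne wA] lt by simp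
      moreover have "morph_inf f v' L = f (v' 0) ! L" using first_block[OF ne wA'] lt by simp
      ultimately show False using lcp_neq[of "f (v 0)" "f (v' 0)"] lt eq unfolding L_def by simp
    qed
  qed
qed


lemma nonbreaking:
  assumes abc: "a \<in> A" "b \<in> A" "c \<in> A" "a \<noteq> b" "b \<noteq> c" "a \<noteq> c"
    and nc: "\<not> length (lcp (f b) (f c)) > length (lcp (f a) (f b))"
  shows "\<exists>w. (\<forall>n. w n \<in> A) \<and> fragile a b c w \<and> LSP_inf w \<and> LSP_inf (morph_inf f w)"
proof -
  define w where "w = (\<lambda>n::nat. [a,b,c] ! (n mod 3))"
  have m3: "\<And>n::nat. n mod 3 = 0 \<or> n mod 3 = 1 \<or> n mod 3 = 2" by arith
  have wv: "\<And>n. w n = (if n mod 3 = 0 then a else if n mod 3 = 1 then b else c)"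
    unfolding w_def using m3 by (metis One_nat_def nth_Cons_0 nth_Cons_Suc numeral_2_eq_2)
  have wA: "\<forall>n. w n \<in> A" using wv abc by simp
  have winj: "\<And>n m. w n = w m \<Longrightarrow> n mod 3 = m mod 3" using wv abc m3 by metis
  have w0: "w 0 = a" "w 1 = b" "w 2 = c" using wv by auto
  have sh: "\<And>k. (\<lambda>j. w (k + j)) = (\<lambda>j. w (k mod 3 + j))"
    unfolding w_def by (rule ext) (simp add: mod_add_left_eq)
  have frag: "fragile a b c w" unfolding fragile_def
  proof (intro exI conjI)
    show "a \<noteq> b" using abc by simp
    show "is_prefix_inf ([] @ [a]) w" unfolding is_prefix_inf_def using w0 by (simp add: pref_def)
    show "is_factor_inf (a # [] @ [b]) w" unfolding fac_iff
      using w0 by (intro exI[of _ 0]) (auto simp: less_Suc_eq)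
    show "is_factor_inf (b # [] @ [c]) w" unfolding fac_iff
      using w0 by (intro exI[of _ 1]) (auto simp: less_Suc_eq numeral_2_eq_2)
  qed
  have lw: "LSP_inf w" unfolding LSP_inf_def
  proof (intro allI impI)
    fix u assume ls: "left_special_inf u w"
    show "is_prefix_inf u w"
    proof (cases "u = []")
      case True then show ?thesis by (simp add: is_prefix_inf_def)
    next
      case False
      obtain x y where xy: "x \<noteq> y" "is_factor_inf (x#u) w" "is_factor_inf (y#u) w"
        using ls unfolding left_special_inf_def by blast
      obtain i where i: "\<forall>t<length (x#u). w (i+t) = (x#u)!t" using xy(2) unfolding fac_iff by blast
      obtain j where j: "\<forall>t<length (y#u). w (j+t) = (y#u)!t" using xy(3) unfolding fac_iff by blast
      have "w (i+1) = u!0" using i[rule_format, of 1] False by (cases u) auto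
      moreover have "w (j+1) = u!0" using j[rule_format, of 1] False by (cases u) auto
      ultimately have "(i+1) mod 3 = (j+1) mod 3" using winj by metis
      then have "i mod 3 = j mod 3" by presburger
      then have "w i = w j" unfolding w_def by simp
      moreover have "w (i+0) = x" using i by auto
      moreover have "w (j+0) = y" using j by auto
      ultimately show ?thesis using xy(1) by simp
    qed
  qed
  let ?G = "\<lambda>r. morph_inf f (\<lambda>j. w (r + j))"
  have G0: "?G 0 = morph_inf f w" by simp
  have shA: "\<And>r. \<forall>n. (\<lambda>j. w (r + j)) n \<in> A" using wA by simp
  have key: "\<And>u r r'. r < 3 \<Longrightarrow> r' < 3 \<Longrightarrow> r \<noteq> r' \<Longrightarrow> u = pref (?G r) (length u) \<Longrightarrow>
     u = pref (?G r') (length u) \<Longrightarrow> u = pref (morph_inf f w) (length u)"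
  proof -
    fix u r r' assume r: "(r::nat) < 3" "r' < 3" "r \<noteq> r'" and u1: "u = pref (?G r) (length u)"
      and u2: "u = pref (?G r') (length u)"
    have lbc: "length (lcp (f b) (f c)) \<le> length (lcp (f a) (f b))" using nc by simp
    have c4: "r = 0 \<or> r' = 0 \<or> (r = 1 \<and> r' = 2) \<or> (r = 2 \<and> r' = 1)" using r by arith
    have agree: "length u \<le> length (lcp (f a) (f b)) \<Longrightarrow> pref (morph_inf f w) (length u) = pref (?G 1) (length u)"
      using lcp_agree[OF wA shA[of 1], of "length u"] w0 by simp
    show "u = pref (morph_inf f w) (length u)"
    proof -
      consider "r = 0" | "r' = 0" | "r = 1 \<and> r' = 2" | "r = 2 \<and> r' = 1" using c4 by blast
      then show ?thesis
      proof cases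
        case 1 then show ?thesis using u1 by simp
      next
        case 2 then show ?thesis using u2 by simp
      next
        case 3
        have "length u \<le> length (lcp (f b) (f c))"
          using lcp_bound[OF shA[of 1] shA[of 2], of u] u1 u2 3 w0 abc by simp
        then show ?thesis using agree lbc u1 3 by simp
      next
        case 4
        have "length u \<le> length (lcp (f c) (f b))"
          using lcp_bound[OF shA[of 2] shA[of 1], of u] u1 u2 4 w0 abc by simp
        then have "length u \<le> length (lcp (f b) (f c))" using lcp_sym by metis
        then show ?thesis using agree lbc u2 4 by simp
      qed
    qed
  qed
  have lfw: "LSP_inf (morph_inf f w)" unfolding LSP_inf_def
  proof (intro allI impI)
    fix u assume ls: "left_special_inf u (morph_inf f w)"
    show "is_prefix_inf u (morph_inf f w)"
    proof (cases "u = []")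
      case True then show ?thesis by (simp add: is_prefix_inf_def)
    next
      case False
      obtain m m' where mm: "w m \<noteq> w m'" "u = pref (?G (Suc m)) (length u)"
        "u = pref (?G (Suc m')) (length u)"
        using ls_blocks[OF wA ls False] by blast
      have "m mod 3 \<noteq> m' mod 3" using mm(1) unfolding w_def by auto
      then have d: "Suc m mod 3 \<noteq> Suc m' mod 3" by presburger
      have "u = pref (?G (Suc m mod 3)) (length u)" using mm(2) sh[of "Suc m"] by simp
      moreover have "u = pref (?G (Suc m' mod 3)) (length u)" using mm(3) sh[of "Suc m'"] by simp
      ultimately have "u = pref (morph_inf f w) (length u)"
        using key[of "Suc m mod 3" "Suc m' mod 3" u] d by simp
      then show ?thesis unfolding is_prefix_inf_def .
    qed
  qed
  show ?thesis using wA frag lw lfw by blast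
qed

end

theorem corollary1:
  fixes A :: "'a set" and f :: "'a \<Rightarrow> 'a list" and a b c :: 'a
  assumes "finite A" and "bLSP A f"
    and "a \<in> A" "b \<in> A" "c \<in> A"
    and "a \<noteq> b" "b \<noteq> c" "a \<noteq> c"
  shows "LSP_breaking A f a b c \<longleftrightarrow> length (lcp (f b) (f c)) > length (lcp (f a) (f b))"
proof -
  from assms(2) obtain \<alpha> where cl: "\<forall>x\<in>A. set (f x) \<subseteq> A" and al: "\<alpha> \<in> A" "f \<alpha> = [\<alpha>]"
    and st: "\<forall>\<beta>\<in>A. \<beta> \<noteq> \<alpha> \<longrightarrow> (\<exists>\<gamma>\<in>A. f \<beta> = f \<gamma> @ [\<beta>])"
    unfolding bLSP_def by blast
  interpret bl A f \<alpha> using cl al st by unfold_locales auto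
  show ?thesis
  proof
    assume br: "LSP_breaking A f a b c"
    show "length (lcp (f b) (f c)) > length (lcp (f a) (f b))"
    proof (rule ccontr)
      assume "\<not> length (lcp (f b) (f c)) > length (lcp (f a) (f b))"
      then obtain w where "(\<forall>n. w n \<in> A)" "fragile a b c w" "LSP_inf w" "LSP_inf (morph_inf f w)"
        using nonbreaking assms(3-8) by blast
      then show False using br unfolding LSP_breaking_def by blast
    qed
  next
    assume "length (lcp (f b) (f c)) > length (lcp (f a) (f b))"
    then show "LSP_breaking A f a b c" unfolding LSP_breaking_def
      using breaking assms(3) by blast
  qed
qed

end
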